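(* Let $G$ be a finite group and $[H],[K]\in\widetilde\Pi(G)$. Let \[X=\bigcap_{\substack{\bar L\in\mathcal{L}(G)\\ \pi_e(H),\pi_e(K)\subseteq\pi_e(\bar L)}}\pi_e(\bar L).\] Then $\{[H],[K]\}$ has a least upper bound in $\widetilde\Pi(G)$ if and only if there exists a subgroup $L'\le G$ with $\pi_e(L')=X$, and in that case the least upper bound is $[L']$. Similarly, let \[Y=\bigcup_{\substack{\widehat L\in\mathcal{L}(G)\\ \pi_e(\widehat L)\subseteq\pi_e(H)\text{ and }\pi_e(\widehat L)\subseteq\pi_e(K)}}\pi_e(\widehat L).\] Then $\{[H],[K]\}$ has a greatest lower bound in $\widetilde\Pi(G)$ if and only if there exists a subgroup $L''\le G$ with $\pi_e(L'')=Y$, and in that case the greatest lower bound is $[L'']$.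
   Context: For a finite group $G$ and a subgroup $H\le G$, let $\pi_e(H)=\{o(x)\mid x\in H\}$. Let $\mathcal{L}(G)$ be the set of subgroups of $G$; define $H_1\equiv H_2$ iff $\pi_e(H_1)=\pi_e(H_2)$, with class $[H]$. The poset $\widetilde\Pi(G)$ is $\mathcal{L}(G)/\!\equiv$ ordered by $[H_1]\lesssim[H_2]$ iff $\pi_e(H_1)\subseteq\pi_e(H_2)$. *)

theory Defs
  imports "HOL-Algebra.Algebra"
begin

definition spec :: "('a, 'b) monoid_scheme \<Rightarrow> 'a set \<Rightarrow> nat set" where
  "spec G H = (\<lambda>x. group.ord G x) ` H"

definition cls :: "('a, 'b) monoid_scheme \<Rightarrow> 'a set \<Rightarrow> 'a set set" where
  "cls G H = {K. subgroup K G \<and> spec G K = spec G H}"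

definition PiT :: "('a, 'b) monoid_scheme \<Rightarrow> 'a set set set" where
  "PiT G = cls G ` {H. subgroup H G}"

definition cls_le :: "('a, 'b) monoid_scheme \<Rightarrow> 'a set set \<Rightarrow> 'a set set \<Rightarrow> bool" where
  "cls_le G A B \<longleftrightarrow> (\<exists>H1 H2. subgroup H1 G \<and> subgroup H2 G \<and> A = cls G H1 \<and> B = cls G H2
                          \<and> spec G H1 \<subseteq> spec G H2)"

definition is_lub2 :: "('a, 'b) monoid_scheme \<Rightarrow> 'a set set \<Rightarrow> 'a set set \<Rightarrow> 'a set set \<Rightarrow> bool" where
  "is_lub2 G A B C \<longleftrightarrow> C \<in> PiT G \<and> cls_le G A C \<and> cls_le G B C \<and>
     (\<forall>D\<in>PiT G. cls_le G A D \<and> cls_le G B D \<longrightarrow> cls_le G C D)"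

definition is_glb2 :: "('a, 'b) monoid_scheme \<Rightarrow> 'a set set \<Rightarrow> 'a set set \<Rightarrow> 'a set set \<Rightarrow> bool" where
  "is_glb2 G A B C \<longleftrightarrow> C \<in> PiT G \<and> cls_le G C A \<and> cls_le G C B \<and>
     (\<forall>D\<in>PiT G. cls_le G D A \<and> cls_le G D B \<longrightarrow> cls_le G D C)"

end

theory Submission
  imports Defs
begin

lemma cls_eq_spec:
  assumes "subgroup A G" "cls G H1 = cls G A"
  shows "spec G A = spec G H1"
proof -
  have "A \<in> cls G A" using assms(1) by (simp add: cls_def)
  then have "A \<in> cls G H1" using assms(2) by simp
  then show ?thesis by (simp add: cls_def)
qed

lemma cls_le_iff:
  assumes "subgroup A G" "subgroup B G"
  shows "cls_le G (cls G A) (cls G B) \<longleftrightarrow> spec G A \<subseteq> spec G B"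
proof
  assume "cls_le G (cls G A) (cls G B)"
  then obtain H1 H2 where "subgroup H1 G" "subgroup H2 G" "cls G A = cls G H1"
     "cls G B = cls G H2" "spec G H1 \<subseteq> spec G H2" unfolding cls_le_def by blast
  then show "spec G A \<subseteq> spec G B"
    using cls_eq_spec[of A G H1] cls_eq_spec[of B G H2] assms by auto
next
  assume "spec G A \<subseteq> spec G B"
  then show "cls_le G (cls G A) (cls G B)" using assms unfolding cls_le_def by blast
qed

lemma PiT_E:
  assumes "D \<in> PiT G"
  obtains L where "subgroup L G" "D = cls G L"
  using assms unfolding PiT_def by blast

lemma PiT_I: "subgroup L G \<Longrightarrow> cls G L \<in> PiT G"
  unfolding PiT_def by blast

theorem lemma2p4:
  fixes G :: "('a, 'b) monoid_scheme" and H K :: "'a set"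
  assumes "group G" and "finite (carrier G)"
    and "subgroup H G" and "subgroup K G"
  defines "SX \<equiv> \<Inter>{spec G L | L. subgroup L G \<and> spec G H \<subseteq> spec G L \<and> spec G K \<subseteq> spec G L}"
    and "SY \<equiv> \<Union>{spec G L | L. subgroup L G \<and> spec G L \<subseteq> spec G H \<and> spec G L \<subseteq> spec G K}"
  shows "((\<exists>C. is_lub2 G (cls G H) (cls G K) C) \<longleftrightarrow> (\<exists>M1. subgroup M1 G \<and> spec G M1 = SX))
       \<and> (\<forall>M1. subgroup M1 G \<and> spec G M1 = SX \<longrightarrow> is_lub2 G (cls G H) (cls G K) (cls G M1))
       \<and> ((\<exists>C. is_glb2 G (cls G H) (cls G K) C) \<longleftrightarrow> (\<exists>M2. subgroup M2 G \<and> spec G M2 = SY))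
       \<and> (\<forall>M2. subgroup M2 G \<and> spec G M2 = SY \<longrightarrow> is_glb2 G (cls G H) (cls G K) (cls G M2))"
proof -
  have lub: "is_lub2 G (cls G H) (cls G K) (cls G M1)" if M1: "subgroup M1 G" "spec G M1 = SX" for M1
  proof -
    have "spec G H \<subseteq> SX" "spec G K \<subseteq> SX" unfolding SX_def by auto
    moreover have "\<forall>D\<in>PiT G. cls_le G (cls G H) D \<and> cls_le G (cls G K) D \<longrightarrow> cls_le G (cls G M1) D"
    proof
      fix D assume "D \<in> PiT G"
      then obtain L where L: "subgroup L G" "D = cls G L" by (rule PiT_E)
      show "cls_le G (cls G H) D \<and> cls_le G (cls G K) D \<longrightarrow> cls_le G (cls G M1) D"
        using L M1 assms(3,4) unfolding SX_def by (auto simp: cls_le_iff)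
    qed
    ultimately show ?thesis using M1 assms(3,4) unfolding is_lub2_def
      by (auto simp: cls_le_iff PiT_I)
  qed
  have glb: "is_glb2 G (cls G H) (cls G K) (cls G M2)" if M2: "subgroup M2 G" "spec G M2 = SY" for M2
  proof -
    have "SY \<subseteq> spec G H" "SY \<subseteq> spec G K" unfolding SY_def by auto
    moreover have "\<forall>D\<in>PiT G. cls_le G D (cls G H) \<and> cls_le G D (cls G K) \<longrightarrow> cls_le G D (cls G M2)"
    proof
      fix D assume "D \<in> PiT G"
      then obtain L where L: "subgroup L G" "D = cls G L" by (rule PiT_E)
      show "cls_le G D (cls G H) \<and> cls_le G D (cls G K) \<longrightarrow> cls_le G D (cls G M2)"
        using L M2 assms(3,4) unfolding SY_def by (auto simp: cls_le_iff)
    qed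
    ultimately show ?thesis using M2 assms(3,4) unfolding is_glb2_def
      by (auto simp: cls_le_iff PiT_I)
  qed
  have lub2: "\<exists>M1. subgroup M1 G \<and> spec G M1 = SX" if "is_lub2 G (cls G H) (cls G K) C" for C
  proof -
    from that have C: "C \<in> PiT G" "cls_le G (cls G H) C" "cls_le G (cls G K) C"
      "\<forall>D\<in>PiT G. cls_le G (cls G H) D \<and> cls_le G (cls G K) D \<longrightarrow> cls_le G C D"
      unfolding is_lub2_def by auto
    obtain M where M: "subgroup M G" "C = cls G M" using C(1) by (rule PiT_E)
    have hk: "spec G H \<subseteq> spec G M" "spec G K \<subseteq> spec G M"
      using C(2,3) M assms(3,4) by (auto simp: cls_le_iff)
    have "SX \<subseteq> spec G M" unfolding SX_def using M(1) hk by blast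
    moreover have "spec G M \<subseteq> SX"
    proof -
      have "spec G M \<subseteq> spec G L" if "subgroup L G" "spec G H \<subseteq> spec G L" "spec G K \<subseteq> spec G L" for L
        using C(4)[rule_format, OF PiT_I[OF that(1)]] that M assms(3,4) by (auto simp: cls_le_iff)
      then show ?thesis unfolding SX_def by blast
    qed
    ultimately show ?thesis using M(1) by blast
  qed
  have glb2: "\<exists>M2. subgroup M2 G \<and> spec G M2 = SY" if "is_glb2 G (cls G H) (cls G K) C" for C
  proof -
    from that have C: "C \<in> PiT G" "cls_le G C (cls G H)" "cls_le G C (cls G K)"
      "\<forall>D\<in>PiT G. cls_le G D (cls G H) \<and> cls_le G D (cls G K) \<longrightarrow> cls_le G D C"
      unfolding is_glb2_def by auto
    obtain M where M: "subgroup M G" "C = cls G M" using C(1) by (rule PiT_E)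
    have hk: "spec G M \<subseteq> spec G H" "spec G M \<subseteq> spec G K"
      using C(2,3) M assms(3,4) by (auto simp: cls_le_iff)
    have "spec G M \<subseteq> SY" unfolding SY_def using M(1) hk by blast
    moreover have "SY \<subseteq> spec G M"
    proof -
      have "spec G L \<subseteq> spec G M" if "subgroup L G" "spec G L \<subseteq> spec G H" "spec G L \<subseteq> spec G K" for L
        using C(4)[rule_format, OF PiT_I[OF that(1)]] that M assms(3,4) by (auto simp: cls_le_iff)
      then show ?thesis unfolding SY_def by blast
    qed
    ultimately show ?thesis using M(1) by blast
  qed
  show ?thesis using lub glb lub2 glb2 by blast
qed

end
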